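(* Let $c_1>0$, $c_2>0$ and $k\in\mathbb{R}\setminus\{0\}$, and consider the system on $\mathbb{R}^3$ $$\dot z_1=\frac1{c_2}z_2z_3,\qquad \dot z_2=-\frac1{c_1}z_1z_3,\qquad \dot z_3=-\frac{k}{c_1}z_1 ,$$ whose equilibrium states are $\widetilde e_0=(0,0,0)$, $\widetilde e_2^m=(0,m,0)$ and $\widetilde e_3^m=(0,0,m)$ for $m\in\mathbb{R}\setminus\{0\}$. Then: (i) $\widetilde e_0$ and $\widetilde e_3^m$ ($m\neq0$) are nonlinear stable; (ii) $\widetilde e_2^m$ ($m\neq0$) is nonlinear stable if $km>0$ and unstable if $km<0$.
   Context: Nonlinear stable means stable in the sense of Lyapunov: for every neighbourhood $U$ of the equilibrium there is a neighbourhood $V$ such that every trajectory starting in $V$ remains in $U$ for all $t\ge0$; unstable means not Lyapunov stable. *)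

theory Defs
  imports "HOL-Analysis.Analysis"
begin

definition trajectory :: "('a::real_normed_vector \<Rightarrow> 'a) \<Rightarrow> (real \<Rightarrow> 'a) \<Rightarrow> bool" where
  "trajectory f x \<longleftrightarrow>
     (\<forall>t\<ge>0. (x has_vector_derivative f (x t)) (at t within {0..}))"

definition lyapunov_stable :: "('a::real_normed_vector \<Rightarrow> 'a) \<Rightarrow> 'a \<Rightarrow> bool" where
  "lyapunov_stable f e \<longleftrightarrow>
     (\<forall>U. open U \<and> e \<in> U \<longrightarrow>
        (\<exists>V. open V \<and> e \<in> V \<and>
           (\<forall>x. trajectory f x \<and> x 0 \<in> V \<longrightarrow> (\<forall>t\<ge>0. x t \<in> U))))"

definition sys :: "real \<Rightarrow> real \<Rightarrow> real \<Rightarrow> real^3 \<Rightarrow> real^3" where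
  "sys c1 c2 k z = vector [ (1 / c2) * z$2 * z$3,
                            - (1 / c1) * z$1 * z$3,
                            - (k / c1) * z$1 ]"

end

theory Submission
  imports Defs
begin


lemma stable_by_invariant:
  fixes f :: "'a::euclidean_space \<Rightarrow> 'a" and \<Phi> :: "'a \<Rightarrow> 'b::real_normed_vector"
  assumes cont: "continuous_on UNIV \<Phi>"
    and inv: "\<And>x t. trajectory f x \<Longrightarrow> t \<ge> 0 \<Longrightarrow> \<Phi> (x t) = \<Phi> (x 0)"
    and r: "r > 0"
    and iso: "\<And>z. dist z e \<le> r \<Longrightarrow> \<Phi> z = \<Phi> e \<Longrightarrow> z = e"
  shows "lyapunov_stable f e"
  unfolding lyapunov_stable_def
proof (intro allI impI, elim conjE)
  fix U :: "'a set" assume "open U" "e \<in> U"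
  then obtain \<epsilon> where \<epsilon>: "\<epsilon> > 0" "ball e \<epsilon> \<subseteq> U" by (meson open_contains_ball)
  define \<rho> where "\<rho> = min r (\<epsilon>/2)"
  have \<rho>: "\<rho> > 0" "\<rho> \<le> r" "\<rho> < \<epsilon>" using r \<epsilon> by (auto simp: \<rho>_def)
  have cn: "continuous_on S (\<lambda>z. norm (\<Phi> z - \<Phi> e))" for S
    by (intro continuous_intros continuous_on_subset[OF cont]) auto
  obtain \<mu> where \<mu>: "\<mu> > 0" "\<And>z. z \<in> sphere e \<rho> \<Longrightarrow> \<mu> \<le> norm (\<Phi> z - \<Phi> e)"
  proof (cases "sphere e \<rho> = {}")
    case True then show ?thesis using that[of 1] by auto
  next
    case False
    obtain z0 where z0: "z0 \<in> sphere e \<rho>" "\<And>y. y \<in> sphere e \<rho> \<Longrightarrow> norm (\<Phi> z0 - \<Phi> e) \<le> norm (\<Phi> y - \<Phi> e)"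
      using continuous_attains_inf[OF compact_sphere False cn] by blast
    have "z0 \<noteq> e" using z0(1) \<rho> by auto
    moreover have "dist z0 e \<le> r" using z0(1) \<rho> by (auto simp: dist_commute)
    ultimately have "\<Phi> z0 \<noteq> \<Phi> e" using iso by blast
    then show ?thesis using that[of "norm (\<Phi> z0 - \<Phi> e)"] z0 by auto
  qed
  have "continuous (at e) \<Phi>" using cont by (simp add: continuous_on_eq_continuous_at)
  then obtain \<delta> where \<delta>: "\<delta> > 0" "\<And>z. dist z e < \<delta> \<Longrightarrow> dist (\<Phi> z) (\<Phi> e) < \<mu>"
    unfolding continuous_at_eps_delta using \<mu>(1) by blast
  show "\<exists>V. open V \<and> e \<in> V \<and> (\<forall>x. trajectory f x \<and> x 0 \<in> V \<longrightarrow> (\<forall>t\<ge>0. x t \<in> U))"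
  proof (intro exI[of _ "ball e (min \<delta> \<rho>)"] conjI allI impI)
    show "open (ball e (min \<delta> \<rho>))" by simp
    show "e \<in> ball e (min \<delta> \<rho>)" using \<delta> \<rho> by simp
    fix x t assume H: "trajectory f x \<and> x 0 \<in> ball e (min \<delta> \<rho>)" and t: "(0::real) \<le> t"
    have tr: "trajectory f x" and x0: "dist (x 0) e < \<delta>" "dist (x 0) e < \<rho>"
      using H by (auto simp: dist_commute)
    have ns: "dist (x s) e \<noteq> \<rho>" if "s \<ge> 0" for s
    proof
      assume "dist (x s) e = \<rho>"
      then have "\<mu> \<le> norm (\<Phi> (x s) - \<Phi> e)" using \<mu>(2)[of "x s"] by (simp add: dist_commute)
      also have "\<dots> = dist (\<Phi> (x 0)) (\<Phi> e)" using inv[OF tr that] by (simp add: dist_norm)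
      also have "\<dots> < \<mu>" using \<delta>(2) x0(1) by blast
      finally show False by simp
    qed
    have cx: "continuous_on {0..} x"
      using tr unfolding trajectory_def
      by (intro continuous_on_vector_derivative) auto
    have cd: "continuous_on {0..t} (\<lambda>s. dist (x s) e)"
      by (intro continuous_intros continuous_on_subset[OF cx]) auto
    have "dist (x t) e < \<rho>"
    proof (rule ccontr)
      assume "\<not> dist (x t) e < \<rho>"
      then obtain s where "0 \<le> s" "s \<le> t" "dist (x s) e = \<rho>"
        using IVT'[of "\<lambda>s. dist (x s) e" 0 \<rho> t, OF _ _ t cd] x0(2) by auto
      then show False using ns by blast
    qed
    then show "x t \<in> U" using \<epsilon> \<rho> by (auto simp: dist_commute)
  qed
qed




lemma sys_comp:
  "sys c1 c2 k z $ 1 = (1 / c2) * z$2 * z$3"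
  "sys c1 c2 k z $ 2 = - (1 / c1) * z$1 * z$3"
  "sys c1 c2 k z $ 3 = - (k / c1) * z$1"
  by (simp_all add: sys_def)

lemma traj_comp:
  assumes "trajectory f x" "t \<ge> 0"
  shows "((\<lambda>t. x t $ i) has_real_derivative (f (x t) $ i)) (at t within {0..})"
  using assms unfolding trajectory_def has_real_derivative_iff_has_vector_derivative
  by (auto intro: bounded_linear.has_vector_derivative[OF bounded_linear_vec_nth])

lemma const_on:
  assumes "\<And>t. t \<ge> 0 \<Longrightarrow> (g has_real_derivative 0) (at t within {0..})" "t \<ge> (0::real)"
  shows "g t = g 0"
proof -
  obtain c where "\<forall>s\<in>{0..}. g s = c"
    using has_field_derivative_zero_constant[of "{0::real..}" g] assms(1) by auto
  then show ?thesis using assms(2) by auto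
qed

definition \<Phi> :: "real \<Rightarrow> real \<Rightarrow> real \<Rightarrow> real^3 \<Rightarrow> real \<times> real" where
  "\<Phi> c1 c2 k z = (c2 * (z$1)^2 + c1 * (z$2)^2, 2 * k * z$2 - (z$3)^2)"

lemma \<Phi>_inv:
  assumes c: "c1 > 0" "c2 > 0" and tr: "trajectory (sys c1 c2 k) x" and t: "t \<ge> 0"
  shows "\<Phi> c1 c2 k (x t) = \<Phi> c1 c2 k (x 0)"
proof -
  note d = traj_comp[OF tr]
  have "(\<lambda>t. c2 * (x t $ 1)^2 + c1 * (x t $ 2)^2) t = (\<lambda>t. c2 * (x t $ 1)^2 + c1 * (x t $ 2)^2) 0"
  proof (rule const_on[OF _ t])
    fix s :: real assume s: "s \<ge> 0"
    show "((\<lambda>t. c2 * (x t $ 1)^2 + c1 * (x t $ 2)^2) has_real_derivative 0) (at s within {0..})"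
      by (rule derivative_eq_intros d[OF s] refl)+ (use c in \<open>simp add: sys_comp field_simps\<close>)
  qed
  moreover
  have "(\<lambda>t. 2 * k * x t $ 2 - (x t $ 3)^2) t = (\<lambda>t. 2 * k * x t $ 2 - (x t $ 3)^2) 0"
  proof (rule const_on[OF _ t])
    fix s :: real assume s: "s \<ge> 0"
    show "((\<lambda>t. 2 * k * x t $ 2 - (x t $ 3)^2) has_real_derivative 0) (at s within {0..})"
      by (rule derivative_eq_intros d[OF s] refl)+ (use c in \<open>simp add: sys_comp field_simps\<close>)
  qed
  ultimately show ?thesis by (simp add: \<Phi>_def)
qed

lemma \<Phi>_cont: "continuous_on UNIV (\<Phi> c1 c2 k)"
proof -
  have [continuous_intros]: "continuous_on UNIV (\<lambda>z::real^3. z $ i)" for i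
    by (simp add: linear_continuous_on bounded_linear_vec_nth)
  show ?thesis unfolding \<Phi>_def
    by (intro continuous_intros continuous_on_Pair continuous_on_compose2[of UNIV "\<lambda>z. z $ i" for i]) auto
qed

lemma vec3_eq_iff: "(z::real^3) = vector [a,b,c] \<longleftrightarrow> z$1 = a \<and> z$2 = b \<and> z$3 = c"
  by (auto simp: vec_eq_iff forall_3)




lemma sq_sum0: "(c1::real) > 0 \<Longrightarrow> c2 > 0 \<Longrightarrow> c2 * a^2 + c1 * b^2 = 0 \<Longrightarrow> a = 0 \<and> b = 0"
  by (metis add_nonneg_nonneg add_pos_nonneg add_nonneg_pos mult_pos_pos mult_nonneg_nonneg
      less_eq_real_def power_zero_numeral zero_le_power2 zero_less_power2 order_less_irrefl)

lemma stab0: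
  assumes c: "c1 > 0" "c2 > 0"
  shows "lyapunov_stable (sys c1 c2 k) (vector [0, 0, 0])"
proof (rule stable_by_invariant[OF \<Phi>_cont \<Phi>_inv[OF c], where r=1])
  fix z :: "real^3" assume "dist z (vector [0,0,0]) \<le> 1" "\<Phi> c1 c2 k z = \<Phi> c1 c2 k (vector [0, 0, 0])"
  then have h: "c2 * (z$1)^2 + c1 * (z$2)^2 = 0" "2 * k * z$2 - (z$3)^2 = 0" by (auto simp: \<Phi>_def)
  have "z$1 = 0" "z$2 = 0" using sq_sum0[OF c h(1)] by auto
  then show "z = vector [0, 0, 0]" using h(2) by (simp add: vec3_eq_iff)
qed auto




lemma stab3:
  assumes c: "c1 > 0" "c2 > 0" and m: "m \<noteq> 0"
  shows "lyapunov_stable (sys c1 c2 k) (vector [0, 0, m])"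
proof (rule stable_by_invariant[OF \<Phi>_cont \<Phi>_inv[OF c], where r="\<bar>m\<bar>"])
  fix z :: "real^3" assume d: "dist z (vector [0, 0, m]) \<le> \<bar>m\<bar>"
    and "\<Phi> c1 c2 k z = \<Phi> c1 c2 k (vector [0, 0, m])"
  then have h: "c2 * (z$1)^2 + c1 * (z$2)^2 = 0" "2 * k * z$2 - (z$3)^2 = - (m^2)" by (auto simp: \<Phi>_def)
  have z12: "z$1 = 0" "z$2 = 0" using sq_sum0[OF c h(1)] by auto
  have a: "\<bar>z$3 - m\<bar> \<le> \<bar>m\<bar>"
    using d component_le_norm_cart[of "z - vector [0,0,m]" 3] by (simp add: dist_norm)
  have "(z$3)^2 = m^2" using h(2) z12 by simp
  then have "z$3 = m \<or> z$3 = -m" by (simp add: power2_eq_iff)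
  then have "z$3 = m" using a m by auto
  then show "z = vector [0, 0, m]" using z12 by (simp add: vec3_eq_iff)
qed (use m in auto)

lemma stab2:
  assumes c: "c1 > 0" "c2 > 0" and m: "k * m > 0"
  shows "lyapunov_stable (sys c1 c2 k) (vector [0, m, 0])"
proof (rule stable_by_invariant[OF \<Phi>_cont \<Phi>_inv[OF c], where r=1])
  fix z :: "real^3" assume "dist z (vector [0, m, 0]) \<le> 1" "\<Phi> c1 c2 k z = \<Phi> c1 c2 k (vector [0, m, 0])"
  then have h: "c2 * (z$1)^2 + c1 * (z$2)^2 = c1 * m^2" "2 * k * z$2 - (z$3)^2 = 2 * k * m"
    by (auto simp: \<Phi>_def)
  have "c2 * (z$1)^2 \<ge> 0" using c by simp
  then have "c1 * (z$2)^2 \<le> c1 * m^2" using h(1) by linarith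
  then have q2: "(z$2)^2 \<le> m^2" using c by simp
  have "k * (z$2 - m) = (z$3)^2 / 2" using h(2) by (simp add: algebra_simps)
  then have kq: "k * (z$2 - m) \<ge> 0" using zero_le_power2[of "z$3"] by linarith
  have "\<bar>z$2\<bar> \<le> \<bar>m\<bar>" using q2 by (simp add: abs_le_square_iff)
  then have "z$2 = m"
    using kq m by (auto simp: zero_le_mult_iff zero_less_mult_iff abs_if split: if_splits)
  then have "c2 * (z$1)^2 = 0" "(z$3)^2 = 0" using h by (auto simp: algebra_simps)
  then have "z$1 = 0" "z$3 = 0" using c by auto
  then show "z = vector [0, m, 0]" using \<open>z$2 = m\<close> by (simp add: vec3_eq_iff)
qed auto




lemma pos1: "(1::real) + W^2 > 0"
  by (metis add_pos_nonneg zero_less_one zero_le_power2)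

lemma id1:
  fixes W a A c1 c2 k :: real
  assumes "k \<noteq> 0" "c1 > 0" "c2 > 0"
  shows "(-2*c1*A*a*(1-6*W^2+W^4)/(k*(1+W^2)^3)) * (W*a)
      = (1/c2) * ((-(a^2*c1*c2)/k) - 8*(-(a^2*c1*c2)/k)*(W^2/(1+W^2)^2)) * (2*A*W/(1+W^2))"
proof -
  obtain D where D: "D = 1+W^2" "D \<noteq> 0" using pos1 by (metis less_irrefl)
  show ?thesis
    apply (simp only: D(1)[symmetric])
    using assms apply (simp add: field_simps D(2) less_imp_neq[symmetric])
    apply (simp only: D(1))
    apply algebra
    done
qed

lemma id2:
  fixes W a A c1 c2 k :: real
  assumes "k \<noteq> 0" "c1 > 0" "c2 > 0"
  shows "(0 - 8*(-(A^2)/(4*k))*(2*W*(1-W^2)/(1+W^2)^3)) * (W*a)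
      = - (1/c1) * (-2*c1*A*a*W*(1-W^2)/(k*(1+W^2)^2)) * (2*A*W/(1+W^2))"
proof -
  obtain D where D: "D = 1+W^2" "D \<noteq> 0" using pos1 by (metis less_irrefl)
  show ?thesis
    apply (simp only: D(1)[symmetric])
    using assms apply (simp add: field_simps D(2) less_imp_neq[symmetric])
    apply algebra
    done
qed

lemma id3:
  fixes W a A c1 c2 k :: real
  assumes "k \<noteq> 0" "c1 > 0" "c2 > 0"
  shows "(2*A*(1-W^2)/(1+W^2)^2) * (W*a)
      = - (k/c1) * (-2*c1*A*a*W*(1-W^2)/(k*(1+W^2)^2))"
  using assms pos1[of W] by (simp add: field_simps)

lemma d1: "((\<lambda>w::real. -2*c1*A*a*w*(1-w^2)/(k*(1+w^2)^2)) has_real_derivative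
   (-2*c1*A*a*(1-6*W^2+W^4)/(k*(1+W^2)^3))) (at W)" if "k \<noteq> 0"
proof -
  obtain D where D: "D = 1+W^2" "D \<noteq> 0" using pos1 by (metis less_irrefl)
  show ?thesis
    apply (rule derivative_eq_intros refl)+
    using that D apply simp
    using that apply (simp add: D(1)[symmetric] field_simps D(2))
    apply (simp only: D(1))
    apply algebra
    done
qed


lemma d2a: "((\<lambda>w::real. w^2/(1+w^2)^2) has_real_derivative
   (2*W*(1-W^2)/(1+W^2)^3)) (at W)"
proof -
  obtain D where D: "D = 1+W^2" "D \<noteq> 0" using pos1 by (metis less_irrefl)
  show ?thesis
    apply (rule derivative_eq_intros refl)+
    using D apply simp
    apply (simp add: D(1)[symmetric] field_simps D(2))
    apply (simp only: D(1))
    apply algebra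
    done
qed

lemma d2: "((\<lambda>w::real. m - 8*m*(w^2/(1+w^2)^2)) has_real_derivative
   (0 - 8*m*(2*W*(1-W^2)/(1+W^2)^3))) (at W)"
  by (intro DERIV_diff DERIV_const DERIV_cmult d2a)

lemma d3: "((\<lambda>w::real. 2*A*w/(1+w^2)) has_real_derivative
   (2*A*(1-W^2)/(1+W^2)^2)) (at W)"
proof -
  obtain D where D: "D = 1+W^2" "D \<noteq> 0" using pos1 by (metis less_irrefl)
  show ?thesis
    apply (rule derivative_eq_intros refl)+
    using D apply simp
    apply (simp add: D(1)[symmetric] field_simps D(2))
    apply (simp only: D(1))
    apply algebra
    done
qed




lemma vec3_axis: "vector [x, y, z] = (x *\<^sub>R axis 1 1 + y *\<^sub>R axis 2 1 + z *\<^sub>R axis 3 1 :: real^3)"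
  by (auto simp: vec_eq_iff forall_3 axis_def)

lemma vec3_deriv:
  assumes "(f1 has_real_derivative d1) (at t within S)" "(f2 has_real_derivative d2) (at t within S)"
    "(f3 has_real_derivative d3) (at t within S)"
  shows "((\<lambda>t. vector [f1 t, f2 t, f3 t] :: real^3) has_vector_derivative vector [d1, d2, d3]) (at t within S)"
  unfolding vec3_axis
  by (rule derivative_eq_intros assms refl)+ simp

definition X :: "real \<Rightarrow> real \<Rightarrow> real \<Rightarrow> real \<Rightarrow> real \<Rightarrow> real \<Rightarrow> real^3" where
  "X c1 k m a A w = vector [-2*c1*A*a*w*(1-w^2)/(k*(1+w^2)^2), m - 8*m*(w^2/(1+w^2)^2), 2*A*w/(1+w^2)]"

lemma X_deriv:
  assumes "k \<noteq> 0"
  shows "(X c1 k m a A has_vector_derivative vector [-2*c1*A*a*(1-6*W^2+W^4)/(k*(1+W^2)^3),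
     0 - 8*m*(2*W*(1-W^2)/(1+W^2)^3), 2*A*(1-W^2)/(1+W^2)^2]) (at W)"
  unfolding X_def[abs_def]
  by (rule vec3_deriv d1[OF assms] d2 d3)+

lemma traj_X:
  assumes c: "c1 > 0" "c2 > 0" "k \<noteq> 0" and ma: "m = -(a^2*c1*c2)/k" and mA: "m = -(A^2)/(4*k)"
  shows "trajectory (sys c1 c2 k) (\<lambda>t. X c1 k m a A (u0 * exp (a * t)))"
  unfolding trajectory_def
proof (intro allI impI)
  fix t :: real
  define W where "W = u0 * exp (a * t)"
  have w: "((\<lambda>t. u0 * exp (a * t)) has_vector_derivative (W * a)) (at t)"
    unfolding W_def has_real_derivative_iff_has_vector_derivative[symmetric]
    by (auto intro!: derivative_eq_intros)
  have "((X c1 k m a A \<circ> (\<lambda>t. u0 * exp (a * t))) has_vector_derivative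
     (W * a) *\<^sub>R vector [-2*c1*A*a*(1-6*W^2+W^4)/(k*(1+W^2)^3),
     0 - 8*m*(2*W*(1-W^2)/(1+W^2)^3), 2*A*(1-W^2)/(1+W^2)^2]) (at t)"
    by (rule vector_diff_chain_at[OF w]) (use X_deriv[OF c(3), of c1 m a A W] in \<open>simp add: W_def\<close>)
  moreover
  have e1: "(-2*c1*A*a*(1-6*W^2+W^4)/(k*(1+W^2)^3)) * (W*a)
      = (1/c2) * (m - 8*m*(W^2/(1+W^2)^2)) * (2*A*W/(1+W^2))"
    unfolding ma by (rule id1[OF c(3,1,2)])
  have e2: "(0 - 8*m*(2*W*(1-W^2)/(1+W^2)^3)) * (W*a)
      = - (1/c1) * (-2*c1*A*a*W*(1-W^2)/(k*(1+W^2)^2)) * (2*A*W/(1+W^2))"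
    unfolding mA by (rule id2[OF c(3,1,2)])
  have e3: "(2*A*(1-W^2)/(1+W^2)^2) * (W*a)
      = - (k/c1) * (-2*c1*A*a*W*(1-W^2)/(k*(1+W^2)^2))"
    by (rule id3[OF c(3,1,2)])
  have "(W * a) *\<^sub>R vector [-2*c1*A*a*(1-6*W^2+W^4)/(k*(1+W^2)^3),
     0 - 8*m*(2*W*(1-W^2)/(1+W^2)^3), 2*A*(1-W^2)/(1+W^2)^2] = sys c1 c2 k (X c1 k m a A W)"
    unfolding vec_eq_iff forall_3 using e1 e2 e3
    by (simp add: sys_comp X_def mult.commute)
  ultimately show "((\<lambda>t. X c1 k m a A (u0 * exp (a * t))) has_vector_derivative
      sys c1 c2 k (X c1 k m a A (u0 * exp (a * t)))) (at t within {0..})"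
    by (auto simp: W_def o_def intro: has_vector_derivative_at_within)
qed




lemma unstable2:
  assumes c: "c1 > 0" "c2 > 0" and km: "k * m < 0"
  shows "\<not> lyapunov_stable (sys c1 c2 k) (vector [0, m, 0])"
proof
  assume st: "lyapunov_stable (sys c1 c2 k) (vector [0, m, 0])"
  define e :: "real^3" where "e = vector [0, m, 0]"
  have k: "k \<noteq> 0" and m: "m \<noteq> 0" using km by auto
  define a where "a = sqrt (-k*m/(c1*c2))"
  define A where "A = 2 * sqrt (-k*m)"
  have pos: "-k*m/(c1*c2) > 0" using km c by (simp add: divide_neg_pos)
  have a: "a > 0" "a^2 = -k*m/(c1*c2)" using pos by (auto simp: a_def)
  have A2: "A^2 = 4*(-k*m)" using km by (simp add: A_def power_mult_distrib)
  have ma: "m = -(a^2*c1*c2)/k" using a(2) c k by (simp add: field_simps)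
  have mA: "m = -(A^2)/(4*k)" using A2 k by (simp add: field_simps)
  obtain V where V: "open V" "e \<in> V"
    "\<And>x. trajectory (sys c1 c2 k) x \<Longrightarrow> x 0 \<in> V \<Longrightarrow> \<forall>t\<ge>0. x t \<in> ball e \<bar>m\<bar>"
    using st m unfolding lyapunov_stable_def e_def
    by (metis centre_in_ball open_ball zero_less_abs_iff)
  obtain \<delta> where \<delta>: "\<delta> > 0" "ball e \<delta> \<subseteq> V" using V(1,2) by (meson open_contains_ball)
  have "continuous (at 0) (X c1 k m a A)"
    using X_deriv[OF k, of c1 m a A 0] by (rule has_vector_derivative_continuous)
  then obtain \<eta> where \<eta>: "\<eta> > 0" "\<And>w. dist w 0 < \<eta> \<Longrightarrow> dist (X c1 k m a A w) (X c1 k m a A 0) < \<delta>"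
    unfolding continuous_at_eps_delta using \<delta>(1) by blast
  have X0: "X c1 k m a A 0 = e" by (simp add: X_def e_def)
  define u0 where "u0 = min (\<eta>/2) (1/2)"
  have u0: "u0 > 0" "u0 < 1" "u0 < \<eta>" using \<eta> by (auto simp: u0_def)
  define x where "x = (\<lambda>t. X c1 k m a A (u0 * exp (a * t)))"
  have tr: "trajectory (sys c1 c2 k) x" unfolding x_def by (rule traj_X[OF c k ma mA])
  have "dist (x 0) e < \<delta>" using \<eta>(2)[of u0] u0 X0 by (simp add: x_def)
  then have "x 0 \<in> V" using \<delta>(2) by (auto simp: dist_commute)
  then have all: "\<forall>t\<ge>0. x t \<in> ball e \<bar>m\<bar>" using V(3) tr by blast
  define T where "T = - ln u0 / a"
  have "ln u0 < 0" using u0 by simp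
  then have T: "T \<ge> 0" using a by (simp add: T_def divide_nonpos_pos)
  have "u0 * exp (a * T) = 1" using u0 a by (simp add: T_def exp_minus exp_ln)
  then have xT: "x T = vector [0, -m, A]" by (simp add: x_def X_def)
  have "x T \<in> ball e \<bar>m\<bar>" using all T by blast
  then have "norm (x T - e) < \<bar>m\<bar>" by (simp add: dist_norm norm_minus_commute)
  moreover have "\<bar>(x T - e) $ 2\<bar> \<le> norm (x T - e)" by (rule component_le_norm_cart)
  moreover have "(x T - e) $ 2 = -2*m" using xT by (simp add: e_def)
  ultimately show False by auto
qed

theorem proposition5p5:
  fixes c1 c2 k :: real
  assumes "c1 > 0" and "c2 > 0" and "k \<noteq> 0"
  shows "lyapunov_stable (sys c1 c2 k) (vector [0, 0, 0])
       \<and> (\<forall>m::real. m \<noteq> 0 \<longrightarrow> lyapunov_stable (sys c1 c2 k) (vector [0, 0, m]))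
       \<and> (\<forall>m::real. m \<noteq> 0 \<and> k * m > 0 \<longrightarrow> lyapunov_stable (sys c1 c2 k) (vector [0, m, 0]))
       \<and> (\<forall>m::real. m \<noteq> 0 \<and> k * m < 0 \<longrightarrow> \<not> lyapunov_stable (sys c1 c2 k) (vector [0, m, 0]))"
  using stab0[OF assms(1,2)] stab3[OF assms(1,2)] stab2[OF assms(1,2)] unstable2[OF assms(1,2)]
  by blast


end
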